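(* Let $d_X, d_Y \ge 1$ and let $\mathcal{F}:\mathbb{R}^{d_X}\to\mathbb{R}^{d_Y}$ be a linear function, $\mathcal{F}(x)=xA$ for a matrix $A\in\mathbb{R}^{d_X\times d_Y}$ (vectors are row vectors). Let $y_1,\dots,y_M\in\mathbb{R}^{d_Y}$ be desired outputs and $x_1^0,\dots,x_M^0\in\mathbb{R}^{d_X}$ arbitrary initial inputs, and run Iterative Inversion with affine least-squares regression as described in the context. If $\operatorname{rank}\big(\mathcal{F}(X^0)-\mathbf{1}\,\overline{\mathcal{F}(X^0)}\big)=d_Y$, then the algorithm converges in one iteration, i.e. $\mathcal{F}(x_i^1)=y_i$ for all $i=1,\dots,M$.
   Context: Iterative Inversion (affine least-squares version). Given desired outputs $y_1,\dots,y_M$ and current inputs $x_1^n,\dots,x_M^n$, form the matrices $X^n=(x_1^n,\dots,x_M^n)^T\in\mathbb{R}^{M\times d_X}$, $\mathcal{F}(X^n)=(\mathcal{F}(x_1^n),\dots,\mathcal{F}(x_M^n))^T\in\mathbb{R}^{M\times d_Y}$, $Y=(y_1,\dots,y_M)^T$, and the row means $\overline{X^n}=\frac1M\sum_i x_i^n$, $\overline{\mathcal{F}(X^n)}=\frac1M\sum_i\mathcal{F}(x_i^n)$, $\overline{Y}=\frac1M\sum_i y_i$; $\mathbf{1}$ denotes the all-ones column vector of length $M$, so $\mathbf{1}u$ repeats the row vector $u$ in each row. The regression step fits an affine map $\mathcal{G}_{\Theta,b}(y)=y\Theta+b$ ($\Theta\in\mathbb{R}^{d_Y\times d_X}$, $b\in\mathbb{R}^{1\times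 d_X}$) by $(\Theta_{n+1},b_{n+1})\in\arg\min_{\Theta,b}\|\mathcal{F}(X^n)\Theta+\mathbf{1}b-X^n\|_F^2$, taking the minimum-norm solution $\Theta_{n+1}=(\mathcal{F}(X^n)-\mathbf{1}\overline{\mathcal{F}(X^n)})^{\dagger}(X^n-\mathbf{1}\overline{X^n})$, $b_{n+1}=\overline{X^n}-\overline{\mathcal{F}(X^n)}\Theta_{n+1}$, where $\dagger$ is the Moore–Penrose pseudoinverse. The new inputs are $x_i^{n+1}=\mathcal{G}_{\Theta_{n+1},b_{n+1}}(y_i)=y_i\Theta_{n+1}+b_{n+1}$. *)

theory Defs
  imports "HOL-Analysis.Analysis"
begin

definition pinv :: "real^'n^'m \<Rightarrow> real^'m^'n" where
  "pinv A = (THE B. A ** B ** A = A \<and> B ** A ** B = B \<and>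
                     transpose (A ** B) = A ** B \<and> transpose (B ** A) = B ** A)"

definition row_mean :: "real^'d^'m \<Rightarrow> real^'d" where
  "row_mean Z = inverse (real CARD('m)) *\<^sub>R (\<Sum>i\<in>UNIV. Z $ i)"

definition centered :: "real^'d^'m \<Rightarrow> real^'d^'m" where
  "centered Z = (\<chi> i. Z $ i - row_mean Z)"

text \<open>Affine least-squares regression step (minimum-norm solution).\<close>
definition ls_Theta :: "real^'x^'m \<Rightarrow> real^'y^'m \<Rightarrow> real^'x^'y" where
  "ls_Theta X FX = pinv (centered FX) ** centered X"

definition ls_b :: "real^'x^'m \<Rightarrow> real^'y^'m \<Rightarrow> real^'x" where
  "ls_b X FX = row_mean X - row_mean FX v* ls_Theta X FX"

text \<open>One step of Iterative Inversion: F is given by F(x) = x A (row vectors);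
  rows of X are the current inputs x_i^n, rows of Y the desired outputs y_i.\<close>
definition iter_inv_step :: "real^'y^'x \<Rightarrow> real^'y^'m \<Rightarrow> real^'x^'m \<Rightarrow> real^'x^'m" where
  "iter_inv_step A Y X =
     (let FX = X ** A; \<Theta> = ls_Theta X FX; b = ls_b X FX
      in (\<chi> i. Y $ i v* \<Theta> + b))"

end

theory Submission
  imports Defs
begin

definition penrose :: "real^'n^'m \<Rightarrow> real^'m^'n \<Rightarrow> bool" where
  "penrose A B \<longleftrightarrow> A ** B ** A = A \<and> B ** A ** B = B \<and>
                     transpose (A ** B) = A ** B \<and> transpose (B ** A) = B ** A"

lemma penrose_unique:
  assumes P1: "penrose A B1" and P2: "penrose A B2"
  shows "B1 = B2"
proof -
  from P1 have a1: "A ** B1 ** A = A" and b1: "B1 ** A ** B1 = B1"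
    and c1: "transpose (A ** B1) = A ** B1" and d1: "transpose (B1 ** A) = B1 ** A"
    by (auto simp: penrose_def)
  from P2 have a2: "A ** B2 ** A = A" and b2: "B2 ** A ** B2 = B2"
    and c2: "transpose (A ** B2) = A ** B2" and d2: "transpose (B2 ** A) = B2 ** A"
    by (auto simp: penrose_def)
  have "B1 = B1 ** (A ** B1)" using b1 by (simp add: matrix_mul_assoc)
  also have "\<dots> = B1 ** ((A ** B2) ** (A ** B1))" using a2 by (simp add: matrix_mul_assoc)
  also have "\<dots> = B1 ** (transpose (A ** B2) ** transpose (A ** B1))" using c1 c2 by simp
  also have "\<dots> = B1 ** transpose (A ** B1 ** A ** B2)"
    by (simp add: matrix_transpose_mul matrix_mul_assoc)
  also have "\<dots> = B1 ** (A ** B2)" using a1 c2 by simp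
  finally have e1: "B1 = B1 ** A ** B2" by (simp add: matrix_mul_assoc)
  have "B2 = (B2 ** A) ** B2" using b2 by simp
  also have "\<dots> = ((B2 ** A) ** (B1 ** A)) ** B2"
  proof -
    have "B2 ** A = B2 ** (A ** B1 ** A)" using a1 by simp
    then show ?thesis by (simp add: matrix_mul_assoc)
  qed
  also have "\<dots> = (transpose (B2 ** A) ** transpose (B1 ** A)) ** B2" using d1 d2 by simp
  also have "\<dots> = transpose (B1 ** A ** B2 ** A) ** B2"
    by (simp add: matrix_transpose_mul matrix_mul_assoc)
  also have "\<dots> = (B1 ** A) ** B2"
  proof -
    have "B1 ** A ** B2 ** A = B1 ** A" using a2 by (metis matrix_mul_assoc)
    then show ?thesis using d1 by simp
  qed
  finally have e2: "B2 = B1 ** A ** B2" by simp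
  show ?thesis using e1 e2 by simp
qed

lemma pinv_eq:
  assumes "penrose A B" shows "pinv A = B"
  unfolding pinv_def
proof (rule the_equality)
  show "A ** B ** A = A \<and> B ** A ** B = B \<and> transpose (A ** B) = A ** B \<and> transpose (B ** A) = B ** A"
    using assms by (simp add: penrose_def)
next
  fix B' assume "A ** B' ** A = A \<and> B' ** A ** B' = B' \<and> transpose (A ** B') = A ** B' \<and> transpose (B' ** A) = B' ** A"
  then have "penrose A B'" by (simp add: penrose_def)
  then show "B' = B" using penrose_unique assms by blast
qed

lemma pinv_left_inverse:
  fixes C :: "real^'n^'m"
  assumes "rank C = CARD('n)"
  shows "pinv C ** C = mat 1"
proof -
  have injC: "inj ((*v) C)" using assms full_rank_injective by blast
  define G where "G = transpose C ** C"
  have "\<forall>x. G *v x = 0 \<longrightarrow> x = 0"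
  proof (intro allI impI)
    fix x assume "G *v x = 0"
    then have "inner x (G *v x) = 0" by simp
    also have "inner x (G *v x) = inner (C *v x) (C *v x)"
      unfolding G_def
      by (simp add: matrix_vector_mul_assoc[symmetric] dot_lmul_matrix[symmetric] inner_commute)
    finally have "C *v x = 0" by simp
    then have "C *v x = C *v 0" by simp
    then show "x = 0" using injC by (metis injD)
  qed
  then obtain H where HG: "H ** G = mat 1" using matrix_left_invertible_ker by blast
  then have GH: "G ** H = mat 1" using matrix_left_right_inverse by blast
  have tG: "transpose G = G" unfolding G_def by (simp add: matrix_transpose_mul)
  have "transpose H ** G = transpose (G ** H)" using tG by (simp add: matrix_transpose_mul)
  then have tHG: "transpose H ** G = mat 1" using GH by simp
  have "transpose H = transpose H ** (G ** H)" using GH by simp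
  also have "\<dots> = H" using tHG by (simp add: matrix_mul_assoc)
  finally have tH: "transpose H = H" .
  define B where "B = H ** transpose C"
  have BC: "B ** C = mat 1" unfolding B_def using HG G_def by (simp add: matrix_mul_assoc)
  have "penrose C B"
    unfolding penrose_def
  proof (intro conjI)
    show "C ** B ** C = C" using BC by (metis matrix_mul_assoc matrix_mul_rid)
    show "B ** C ** B = B" using BC by simp
    show "transpose (C ** B) = C ** B" unfolding B_def
      using tH by (simp add: matrix_transpose_mul matrix_mul_assoc)
    show "transpose (B ** C) = B ** C" using BC by simp
  qed
  then have "pinv C = B" by (rule pinv_eq)
  then show ?thesis using BC by simp
qed

lemma row_mult: "(X ** A) $ i = X $ i v* A"
  by (simp add: matrix_matrix_mult_def vector_matrix_mult_def vec_eq_iff mult.commute)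

lemma sum_vmult: "(\<Sum>i\<in>S. f i) v* A = (\<Sum>i\<in>S. f i v* A)"
  by (simp add: vec_eq_iff vector_matrix_mult_def sum_component sum_distrib_right sum.swap[of _ UNIV S])

lemma row_mean_mult: "row_mean (X ** (A::real^'b^'a)) = row_mean (X::real^'a^'m) v* A"
  unfolding row_mean_def
  by (simp add: row_mult sum_vmult scaleR_vector_matrix_assoc)

lemma centered_mult: "centered (X ** A) = centered X ** A"
  by (simp add: centered_def vec_eq_iff row_mult row_mean_mult vector_matrix_mult_diff_distrib)

theorem theorem1:
  fixes A :: "real^'y^'x" and Y :: "real^'y^'m" and X0 :: "real^'x^'m"
  assumes "rank (centered (X0 ** A)) = CARD('y)"
  shows "\<forall>i. (iter_inv_step A Y X0 $ i) v* A = Y $ i"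
proof
  fix i
  let ?C = "centered (X0 ** A)"
  have P: "pinv ?C ** ?C = mat 1" using pinv_left_inverse[OF assms] .
  have TA: "ls_Theta X0 (X0 ** A) ** A = mat 1"
    unfolding ls_Theta_def using P by (simp add: matrix_mul_assoc centered_mult)
  show "(iter_inv_step A Y X0 $ i) v* A = Y $ i"
  proof -
    let ?T = "ls_Theta X0 (X0 ** A)"
    have "(iter_inv_step A Y X0 $ i) v* A
       = (Y $ i v* ?T + (row_mean X0 - row_mean (X0 ** A) v* ?T)) v* A"
      unfolding iter_inv_step_def Let_def ls_b_def by simp
    also have "\<dots> = Y $ i v* (?T ** A) + (row_mean X0 v* A - row_mean (X0 ** A) v* (?T ** A))"
      by (simp only: vector_matrix_left_distrib vector_matrix_mult_diff_distrib
        vector_matrix_mul_assoc)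
    also have "\<dots> = Y $ i"
      using TA by (simp add: row_mean_mult)
    finally show ?thesis .
  qed
qed

end
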